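(* Let $A,B\in\mathbb{R}^{m\times n}$ with $m<n$ and $b\in\mathbb{R}^m$, and let $1\le p\le\infty$. Let $A = M_A - N_A$ with $\operatorname{rank}(M_A) =m$. If $M_A^\dagger b\geq0$, $M_A^\dagger (N_A + B) \geq 0$ and $\|M_A^\dagger (N_A + B)\|_p <1$, then the equation $Ax-B|x|=b$ has at least one nonnegative solution.
   Context: $M^\dagger$ is the Moore–Penrose inverse; $|x|$ is the entrywise absolute value; vector/matrix inequalities are entrywise; $\|\cdot\|_p$ on matrices is the operator norm induced by the vector $p$-norm. *)

theory Defs
  imports "HOL-Analysis.Analysis" "HOL-Library.Extended_Real"
begin

text \<open>Moore--Penrose inverse, defined by the four Penrose conditions.\<close>
definition mp_pinv :: "real^'n^'m \<Rightarrow> real^'m^'n" where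
  "mp_pinv M = (THE X. M ** X ** M = M \<and> X ** M ** X = X \<and>
       transpose (M ** X) = M ** X \<and> transpose (X ** M) = X ** M)"

text \<open>Vector p-norm for p in [1, infinity] (p an extended real).\<close>
definition vec_pnorm :: "ereal \<Rightarrow> real^'n \<Rightarrow> real" where
  "vec_pnorm p x = (if p = \<infinity> then Max (range (\<lambda>i. \<bar>x $ i\<bar>))
      else (\<Sum>i\<in>UNIV. \<bar>x $ i\<bar> powr real_of_ereal p) powr (1 / real_of_ereal p))"

text \<open>Operator norm induced by the vector p-norm.\<close>
definition mat_pnorm :: "ereal \<Rightarrow> real^'n^'m \<Rightarrow> real" where
  "mat_pnorm p M = Sup {vec_pnorm p (M *v x) | x. vec_pnorm p x = 1}"

definition vabs :: "real^'n \<Rightarrow> real^'n" where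
  "vabs x = (\<chi> i. \<bar>x $ i\<bar>)"

definition vnonneg :: "real^'n \<Rightarrow> bool" where
  "vnonneg x \<longleftrightarrow> (\<forall>i. 0 \<le> x $ i)"

definition mnonneg :: "real^'n^'m \<Rightarrow> bool" where
  "mnonneg M \<longleftrightarrow> (\<forall>i j. 0 \<le> M $ i $ j)"

end

theory Submission
  imports Defs
begin

lemma r_ge1: assumes "1 \<le> p" "p \<noteq> \<infinity>" shows "1 \<le> real_of_ereal p"
  using assms by (cases p) auto

lemma vp_comp: assumes "1 \<le> p" shows "\<bar>x$i\<bar> \<le> vec_pnorm p x"
proof (cases "p = \<infinity>")
  case True
  have "\<bar>x$i\<bar> \<le> Max (range (\<lambda>i. \<bar>x $ i\<bar>))" by (rule Max_ge) auto
  thus ?thesis using True by (simp add: vec_pnorm_def)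
next
  case False
  let ?r = "real_of_ereal p"
  have r: "1 \<le> ?r" using r_ge1 assms False by auto
  have "\<bar>x$i\<bar> = (\<bar>x$i\<bar> powr ?r) powr (1/?r)" using r by (simp add: powr_powr)
  also have "\<dots> \<le> (\<Sum>j\<in>UNIV. \<bar>x$j\<bar> powr ?r) powr (1/?r)"
    by (rule powr_mono2) (use r in \<open>auto intro: member_le_sum\<close>)
  finally show ?thesis using False by (simp add: vec_pnorm_def)
qed

lemma vp_nonneg: assumes "1 \<le> p" shows "0 \<le> vec_pnorm p x"
  using vp_comp[OF assms, of x undefined] by linarith

lemma vp_zero: assumes "1 \<le> p" "vec_pnorm p x = 0" shows "x = 0"
  using vp_comp[OF assms(1), of x] assms(2) by (simp add: vec_eq_iff)

lemma vp_mono: assumes "1 \<le> p" "\<forall>i. \<bar>u$i\<bar> \<le> \<bar>v$i\<bar>" shows "vec_pnorm p u \<le> vec_pnorm p v"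
proof (cases "p = \<infinity>")
  case True
  have "Max (range (\<lambda>i. \<bar>u $ i\<bar>)) \<le> Max (range (\<lambda>i. \<bar>v $ i\<bar>))"
  proof (subst Max_le_iff, auto)
    fix i
    have "\<bar>v$i\<bar> \<le> Max (range (\<lambda>i. \<bar>v $ i\<bar>))" by (rule Max_ge) auto
    thus "\<bar>u$i\<bar> \<le> Max (range (\<lambda>i. \<bar>v $ i\<bar>))" using assms(2) by (meson order_trans)
  qed
  thus ?thesis using True by (simp add: vec_pnorm_def)
next
  case False
  let ?r = "real_of_ereal p"
  have r: "1 \<le> ?r" using r_ge1 assms False by auto
  have "(\<Sum>j\<in>UNIV. \<bar>u$j\<bar> powr ?r) powr (1/?r) \<le> (\<Sum>j\<in>UNIV. \<bar>v$j\<bar> powr ?r) powr (1/?r)"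
    apply (rule powr_mono2)
    using r apply simp
     apply (simp add: sum_nonneg)
    apply (rule sum_mono)
    apply (rule powr_mono2)
    using r assms(2) by auto
  thus ?thesis using False by (simp add: vec_pnorm_def)
qed

lemma vp_scale: assumes "1 \<le> p" "0 \<le> t" shows "vec_pnorm p (t *\<^sub>R x) = t * vec_pnorm p x"
proof (cases "p = \<infinity>")
  case True
  have e: "range (\<lambda>i. \<bar>(t *\<^sub>R x) $ i\<bar>) = (\<lambda>a. t * a) ` range (\<lambda>i. \<bar>x $ i\<bar>)"
    using assms(2) by (auto simp: abs_mult image_image)
  have "t * Max (range (\<lambda>i. \<bar>x $ i\<bar>)) = Max ((\<lambda>a. t * a) ` range (\<lambda>i. \<bar>x $ i\<bar>))"
    by (rule mono_Max_commute) (auto simp: mono_def assms(2) mult_left_mono)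
  thus ?thesis using True e by (simp add: vec_pnorm_def)
next
  case False
  let ?r = "real_of_ereal p"
  have r: "1 \<le> ?r" using r_ge1 assms False by auto
  have "(\<Sum>j\<in>UNIV. \<bar>(t *\<^sub>R x)$j\<bar> powr ?r) = (\<Sum>j\<in>UNIV. t powr ?r * \<bar>x$j\<bar> powr ?r)"
    using assms(2) by (simp add: abs_mult powr_mult)
  also have "\<dots> = t powr ?r * (\<Sum>j\<in>UNIV. \<bar>x$j\<bar> powr ?r)" by (simp add: sum_distrib_left)
  finally have "(\<Sum>j\<in>UNIV. \<bar>(t *\<^sub>R x)$j\<bar> powr ?r) powr (1/?r)
      = (t powr ?r) powr (1/?r) * (\<Sum>j\<in>UNIV. \<bar>x$j\<bar> powr ?r) powr (1/?r)"
    by (simp add: powr_mult)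
  also have "(t powr ?r) powr (1/?r) = t" using r assms(2) by (simp add: powr_powr)
  finally show ?thesis using False by (simp add: vec_pnorm_def)
qed

lemma vp_0: assumes "1 \<le> p" shows "vec_pnorm p (0::real^'n) = 0"
  using vp_scale[OF assms, of 0 "0::real^'n"] by simp

lemma contr:
  fixes C :: "real^'n^'n"
  assumes p: "1 \<le> p"
  shows "vec_pnorm p (C *v y) \<le> mat_pnorm p C * vec_pnorm p y"
proof (cases "y = 0")
  case True thus ?thesis by (simp add: vp_0[OF p])
next
  case False
  define S where "S = {vec_pnorm p (C *v x) | x. vec_pnorm p x = 1}"
  define k :: "real^'n" where "k = (\<chi> i. \<Sum>j\<in>UNIV. \<bar>C$i$j\<bar>)"
  have bdd: "bdd_above S"
  proof (rule bdd_aboveI)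
    fix a assume "a \<in> S"
    then obtain x where x: "vec_pnorm p x = 1" "a = vec_pnorm p (C *v x)" by (auto simp: S_def)
    have "\<forall>i. \<bar>(C *v x)$i\<bar> \<le> \<bar>k$i\<bar>"
    proof
      fix i
      have "\<bar>(C *v x)$i\<bar> = \<bar>\<Sum>j\<in>UNIV. C$i$j * x$j\<bar>" by (simp add: matrix_vector_mult_def)
      also have "\<dots> \<le> (\<Sum>j\<in>UNIV. \<bar>C$i$j * x$j\<bar>)" by (rule sum_abs)
      also have "\<dots> \<le> (\<Sum>j\<in>UNIV. \<bar>C$i$j\<bar>)"
      proof (rule sum_mono)
        fix j
        have "\<bar>x$j\<bar> \<le> 1" using vp_comp[OF p, of x j] x by simp
        thus "\<bar>C$i$j * x$j\<bar> \<le> \<bar>C$i$j\<bar>" by (simp add: abs_mult mult_left_le)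
      qed
      also have "\<dots> = \<bar>k$i\<bar>" by (simp add: k_def sum_nonneg)
      finally show "\<bar>(C *v x)$i\<bar> \<le> \<bar>k$i\<bar>" .
    qed
    thus "a \<le> vec_pnorm p k" using vp_mono[OF p] x by simp
  qed
  define s where "s = vec_pnorm p y"
  have s: "0 < s" using vp_nonneg[OF p, of y] vp_zero[OF p, of y] False s_def by force
  define y' where "y' = (1/s) *\<^sub>R y"
  have y': "vec_pnorm p y' = 1" using vp_scale[OF p, of "1/s" y] s s_def y'_def by simp
  have "vec_pnorm p (C *v y') \<in> S" unfolding S_def using y' by blast
  hence le: "vec_pnorm p (C *v y') \<le> Sup S" using bdd by (rule cSup_upper)
  have "vec_pnorm p (C *v y') = (1/s) * vec_pnorm p (C *v y)"
    using vp_scale[OF p, of "1/s" "C *v y"] s by (simp add: y'_def matrix_vector_mult_scaleR)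
  with le s have "vec_pnorm p (C *v y) \<le> Sup S * s" by (simp add: field_simps)
  thus ?thesis by (simp add: mat_pnorm_def S_def s_def mult.commute)
qed

lemma mp_right:
  fixes M :: "real^'n^'m"
  assumes "rank M = CARD('m)"
  shows "M ** mp_pinv M = mat 1"
proof -
  have surj: "surj ((*v) M)" using assms full_rank_surjective by blast
  then obtain R where R: "M ** R = mat 1" using matrix_right_invertible_surjective by blast
  define G where "G = M ** transpose M"
  have "\<forall>y. G *v y = 0 \<longrightarrow> y = 0"
  proof (intro allI impI)
    fix y assume "G *v y = 0"
    hence "inner y (G *v y) = 0" by simp
    hence "inner (transpose M *v y) (transpose M *v y) = 0"
      by (simp add: G_def matrix_vector_mul_assoc[symmetric] dot_lmul_matrix[symmetric])
    hence tz: "transpose M *v y = 0" by simp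
    obtain z where "y = M *v z" using surj by (metis surjD)
    hence "inner y y = inner (transpose M *v y) z"
      by (metis dot_lmul_matrix transpose_matrix_vector transpose_transpose vector_transpose_matrix)
    thus "y = 0" using tz by simp
  qed
  then obtain Gi where Gi1: "Gi ** G = mat 1" using matrix_left_invertible_ker by blast
  hence Gi2: "G ** Gi = mat 1" using matrix_left_right_inverse by blast
  have GT: "transpose G = G" by (simp add: G_def matrix_transpose_mul)
  have "transpose Gi ** G = mat 1" using Gi2 GT by (metis matrix_transpose_mul transpose_mat)
  hence GiT: "transpose Gi = Gi"
    by (metis Gi2 matrix_mul_assoc matrix_mul_lid matrix_mul_rid)
  define X0 where "X0 = transpose M ** Gi"
  have MX0: "M ** X0 = mat 1" using Gi2 by (simp add: X0_def G_def matrix_mul_assoc)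
  let ?P = "\<lambda>X. M ** X ** M = M \<and> X ** M ** X = X \<and>
       transpose (M ** X) = M ** X \<and> transpose (X ** M) = X ** M"
  have P0: "?P X0"
    using MX0 GiT by (auto simp: matrix_mul_assoc[symmetric] X0_def matrix_transpose_mul)
  have uniq: "X = X0" if PX: "?P X" for X
  proof -
    have "M ** X ** M ** R = M ** R" using PX by simp
    hence MX: "M ** X = mat 1" using R by (simp add: matrix_mul_assoc[symmetric])
    have "X ** M = transpose M ** transpose X" using PX by (metis matrix_transpose_mul)
    hence "X ** G = transpose M ** transpose (M ** X)"
      by (simp add: G_def matrix_mul_assoc matrix_transpose_mul)
    hence "X ** G = transpose M" using MX by simp
    hence "X ** G ** Gi = X0" by (simp add: X0_def)
    thus "X = X0" using Gi2 by (simp add: matrix_mul_assoc[symmetric])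
  qed
  have "mp_pinv M = X0" unfolding mp_pinv_def
    by (rule the_equality) (use P0 uniq in blast)+
  thus ?thesis using MX0 by simp
qed

theorem corollary3p6:
  fixes A B M\<^sub>A N\<^sub>A :: "real^'n^'m" and b :: "real^'m" and p :: ereal
  assumes "CARD('m) < CARD('n)"
    and "1 \<le> p"
    and "A = M\<^sub>A - N\<^sub>A"
    and "rank M\<^sub>A = CARD('m)"
    and "vnonneg (mp_pinv M\<^sub>A *v b)"
    and "mnonneg (mp_pinv M\<^sub>A ** (N\<^sub>A + B))"
    and "mat_pnorm p (mp_pinv M\<^sub>A ** (N\<^sub>A + B)) < 1"
  shows "\<exists>x. vnonneg x \<and> A *v x - B *v vabs x = b"
proof -
  note p = assms(2)
  define X where "X = mp_pinv M\<^sub>A"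
  define C where "C = X ** (N\<^sub>A + B)"
  define c where "c = X *v b"
  define q where "q = mat_pnorm p C"
  have MX: "M\<^sub>A ** X = mat 1" using mp_right[OF assms(4)] X_def by simp
  have q1: "q < 1" using assms(7) by (simp add: q_def C_def X_def)
  have Cnn: "\<And>i j. 0 \<le> C$i$j" using assms(6) by (simp add: mnonneg_def C_def X_def)
  have cnn: "\<And>i. 0 \<le> c$i" using assms(5) by (simp add: vnonneg_def c_def X_def)
  have small: "y = 0" if "vec_pnorm p y \<le> vec_pnorm p (C *v y)" for y
  proof -
    have "vec_pnorm p y \<le> q * vec_pnorm p y" using contr[OF p, of C y] that q_def by simp
    hence "vec_pnorm p y \<le> 0" using q1 vp_nonneg[OF p, of y]
      by (metis mult_le_cancel_right1 not_le)
    thus ?thesis using vp_nonneg[OF p, of y] vp_zero[OF p] by force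
  qed
  have inj: "inj ((*v) (mat 1 - C))"
  proof -
    have "\<forall>y. (mat 1 - C) *v y = 0 \<longrightarrow> y = 0"
    proof (intro allI impI)
      fix y assume "(mat 1 - C) *v y = 0"
      hence "C *v y = y" by (simp add: matrix_vector_mult_diff_rdistrib)
      thus "y = 0" using small by simp
    qed
    thus ?thesis using matrix_left_invertible_ker matrix_left_invertible_injective by blast
  qed
  have "surj ((*v) (mat 1 - C))"
    using inj full_rank_injective full_rank_surjective by blast
  then obtain x where "(mat 1 - C) *v x = c" by (metis surjD)
  hence xe: "x = C *v x + c" by (simp add: matrix_vector_mult_diff_rdistrib algebra_simps)
  define z :: "real^'n" where "z = (\<chi> i. max (- x$i) 0)"
  have "\<forall>i. \<bar>z$i\<bar> \<le> \<bar>(C *v z)$i\<bar>"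
  proof
    fix i
    have Cz: "(C *v z)$i = (\<Sum>j\<in>UNIV. C$i$j * z$j)" by (simp add: matrix_vector_mult_def)
    have nn: "0 \<le> (C *v z)$i" unfolding Cz
      by (rule sum_nonneg) (simp add: Cnn z_def)
    have "x$i = (C *v x)$i + c$i" using xe by (metis vector_add_component)
    hence "x$i = (\<Sum>j\<in>UNIV. C$i$j * x$j) + c$i" by (simp add: matrix_vector_mult_def)
    also have "\<dots> \<ge> (\<Sum>j\<in>UNIV. C$i$j * (- z$j))"
    proof -
      have "(\<Sum>j\<in>UNIV. C$i$j * (- z$j)) \<le> (\<Sum>j\<in>UNIV. C$i$j * x$j)"
        by (rule sum_mono, rule mult_left_mono) (auto simp: z_def Cnn)
      thus ?thesis using cnn[of i] by linarith
    qed
    finally have "- x$i \<le> (C *v z)$i" unfolding Cz by (simp add: sum_negf)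
    thus "\<bar>z$i\<bar> \<le> \<bar>(C *v z)$i\<bar>" using nn by (simp add: z_def)
  qed
  hence "z = 0" using small[of z] vp_mono[OF p, of z "C *v z"] by simp
  hence xnn: "\<And>i. 0 \<le> x$i" by (simp add: z_def vec_eq_iff max_def split: if_splits) (metis order_refl)
  have va: "vabs x = x" using xnn by (simp add: vabs_def vec_eq_iff)
  have "M\<^sub>A *v x = (M\<^sub>A ** X ** (N\<^sub>A + B)) *v x + (M\<^sub>A ** X) *v b"
    by (subst xe) (simp add: C_def c_def matrix_vector_right_distrib matrix_vector_mul_assoc matrix_mul_assoc)
  hence "M\<^sub>A *v x = N\<^sub>A *v x + B *v x + b" using MX by (simp add: matrix_vector_mult_add_rdistrib)
  hence "A *v x - B *v vabs x = b" using va assms(3) by (simp add: matrix_vector_mult_diff_rdistrib)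
  thus ?thesis using xnn vnonneg_def by blast
qed

end
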